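(* Let $S$ be a rectangular domain and $\ell,\ell'\in C(S)$. Then $\ell'\succeq\ell$ if and only if every vertex of $\ell'$ belongs to $A(\ell)$, where $$A(\ell)=\bigcup_{(t_*,x_* )\text{ vertex of }\ell}\{(t,x)\in\tilde{\mathbb{Z}}^2: t\ge t_*+|x-x_*|\}.$$
   Context: Lattice and domains. $\tilde{\mathbb{Z}}^2=\{(t,x)\in\mathbb{Z}^2:t+x\text{ even}\}$; edges join points at Euclidean distance $\sqrt2$. A rectangular domain is a nonempty set $S=\{(t,x)\in\tilde{\mathbb{Z}}^2: a\le t+x\le b,\ c\le t-x\le d\}$ with even integers $a\le b$, $c\le d$. $\bar S$ is $S$ together with all points joined by an edge to a point of $S$; $\partial\bar S=\bar S\setminus S$; $\mathbb{E}(\bar S)$ is the set of edges with an endpoint in $S$. Broken traces. A broken trace is $\ell=(y_0,e_1,y_1,\dots,e_n,y_n)$, $n\ge1$, with $y_i=(t_i,x_i)\in\tilde{\mathbb{Z}}^2$, $e_i=\langle y_{i-1},y_i\rangle$, $x_i=x_{i-1}+1$, $t_i-t_{i-1}\in\{-1,1\}$. Its vertices are $y_0,\dots,y_n$. - $D(\ell)=\{x_0,\dots,x_n\}$, and $t_\ell(x)$ is the $t$-coordinate of the vertex of $\ell$ with second coordinate $x$. - $\ell\subseteq\bar S$ means $y_0,y_n\in\bar S$, $y_1,\dots,y_{n-1}\in S$, all $e_i\in\mathbb{E}(\bar S)$. - $C(S)$ is the set of $\ell\subseteq\bar S$ with $y_0,y_n\in\partial\bar S$. Order. $\ell'\succeq\ell$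 means that $t_{\ell'}(x)\ge t_\ell(x)$ for all $x\in D(\ell)\cap D(\ell')$, and that $t_{\ell'}(x')\ge t_\ell(x)$ for some $x'\in D(\ell')$, $x\in D(\ell)$. *)

theory Defs
  imports Main
begin

type_synonym pt = "int \<times> int"   (* (t, x) *)

definition lattice :: "pt set" where
  "lattice = {(t, x). even (t + x)}"

definition adj :: "pt \<Rightarrow> pt \<Rightarrow> bool" where
  "adj p q \<longleftrightarrow> p \<in> lattice \<and> q \<in> lattice \<and>
     \<bar>fst p - fst q\<bar> = 1 \<and> \<bar>snd p - snd q\<bar> = 1"

definition rect_dom :: "int \<Rightarrow> int \<Rightarrow> int \<Rightarrow> int \<Rightarrow> pt set" where
  "rect_dom a b c d = {(t, x) \<in> lattice. a \<le> t + x \<and> t + x \<le> b \<and> c \<le> t - x \<and> t - x \<le> d}"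

definition closure_dom :: "pt set \<Rightarrow> pt set" where
  "closure_dom S = S \<union> {q. \<exists>p\<in>S. adj p q}"

definition bdry :: "pt set \<Rightarrow> pt set" where
  "bdry S = closure_dom S - S"

(* edges are unordered pairs {p,q} of adjacent points; E(S bar): an endpoint in S *)
definition edges_cl :: "pt set \<Rightarrow> pt set set" where
  "edges_cl S = {{p, q} | p q. adj p q \<and> (p \<in> S \<or> q \<in> S)}"

(* a broken trace is given by its list of vertices y_0, ..., y_n *)
definition broken_trace :: "pt list \<Rightarrow> bool" where
  "broken_trace l \<longleftrightarrow> length l \<ge> 2 \<and> set l \<subseteq> lattice \<and>
     (\<forall>i. Suc i < length l \<longrightarrow>
        snd (l ! Suc i) = snd (l ! i) + 1 \<and> fst (l ! Suc i) - fst (l ! i) \<in> {-1, 1})"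

definition D :: "pt list \<Rightarrow> int set" where
  "D l = snd ` set l"

definition t_of :: "pt list \<Rightarrow> int \<Rightarrow> int" where
  "t_of l x = (THE t. (t, x) \<in> set l)"

definition trace_in :: "pt list \<Rightarrow> pt set \<Rightarrow> bool" where
  "trace_in l S \<longleftrightarrow> broken_trace l \<and>
     hd l \<in> closure_dom S \<and> last l \<in> closure_dom S \<and>
     (\<forall>i. 0 < i \<and> i < length l - 1 \<longrightarrow> l ! i \<in> S) \<and>
     (\<forall>i. Suc i < length l \<longrightarrow> {l ! i, l ! Suc i} \<in> edges_cl S)"

definition C :: "pt set \<Rightarrow> pt list set" where
  "C S = {l. trace_in l S \<and> hd l \<in> bdry S \<and> last l \<in> bdry S}"

(* succeq l' l  means  l' \<succeq> l *)
definition succeq :: "pt list \<Rightarrow> pt list \<Rightarrow> bool" where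
  "succeq l' l \<longleftrightarrow> (\<forall>x \<in> D l \<inter> D l'. t_of l' x \<ge> t_of l x) \<and>
     (\<exists>x' \<in> D l'. \<exists>x \<in> D l. t_of l' x' \<ge> t_of l x)"

definition A :: "pt list \<Rightarrow> pt set" where
  "A l = (\<Union>(ts, xs) \<in> set l. {(t, x) \<in> lattice. t \<ge> ts + \<bar>x - xs\<bar>})"

end

theory Submission
  imports Defs
begin

lemma bt_snd: "broken_trace l \<Longrightarrow> i < length l \<Longrightarrow> snd (l!i) = snd (l!0) + int i"
  by (induction i) (auto simp: broken_trace_def)

lemma bt_lip: "broken_trace l \<Longrightarrow> j < length l \<Longrightarrow> i \<le> j \<Longrightarrow>
   fst (l!j) - fst (l!i) \<le> int (j - i) \<and> fst (l!i) - fst (l!j) \<le> int (j - i)"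
proof (induction j)
  case 0 then show ?case by simp
next
  case (Suc j)
  show ?case
  proof (cases "i = Suc j")
    case True then show ?thesis by simp
  next
    case False
    then have ij: "i \<le> j" using Suc by simp
    have IH: "fst (l!j) - fst (l!i) \<le> int (j - i) \<and> fst (l!i) - fst (l!j) \<le> int (j - i)"
      using Suc ij by simp
    have "fst (l ! Suc j) - fst (l ! j) \<in> {-1, 1}" using Suc.prems unfolding broken_trace_def by blast
    then show ?thesis using IH ij by (auto simp: Suc_diff_le)
  qed
qed

lemma bt_tof: assumes "broken_trace l" "i < length l"
  shows "t_of l (snd (l!0) + int i) = fst (l!i)"
  unfolding t_of_def
proof (rule the_equality)
  have "l!i = (fst (l!i), snd (l!0) + int i)" using bt_snd[OF assms] by (metis prod.collapse)
  then show "(fst (l!i), snd (l!0) + int i) \<in> set l" using assms(2) by (metis nth_mem)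
next
  fix t assume "(t, snd (l!0) + int i) \<in> set l"
  then obtain j where j: "j < length l" "l!j = (t, snd (l!0) + int i)" by (metis in_set_conv_nth)
  have "snd (l!j) = snd (l!0) + int j" using bt_snd[OF assms(1) j(1)] .
  then have "j = i" using j by simp
  then show "t = fst (l!i)" using j by simp
qed

definition inR :: "int \<Rightarrow> int \<Rightarrow> int \<Rightarrow> int \<Rightarrow> int \<Rightarrow> int \<Rightarrow> bool" where
  "inR a b c d t x \<longleftrightarrow> a \<le> t + x \<and> t + x \<le> b \<and> c \<le> t - x \<and> t - x \<le> d"

lemma trace_facts:
  assumes "l \<in> C (rect_dom a b c d)"
  shows "\<exists>p0 p1. p0 < p1 \<and> set l = (\<lambda>x. (t_of l x, x)) ` {p0..p1} \<and> D l = {p0..p1}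
    \<and> (\<forall>x y. p0 \<le> x \<longrightarrow> x \<le> y \<longrightarrow> y \<le> p1 \<longrightarrow> t_of l y - t_of l x \<le> y - x \<and> t_of l x - t_of l y \<le> y - x)
    \<and> (\<forall>x\<in>{p0..p1}. even (t_of l x + x))
    \<and> inR a b c d (t_of l (p0+1)) (p0+1) \<and> inR a b c d (t_of l (p1-1)) (p1-1)
    \<and> \<not> inR a b c d (t_of l p0) p0 \<and> \<not> inR a b c d (t_of l p1) p1"
proof -
  let ?S = "rect_dom a b c d"
  have tr: "trace_in l ?S" and hb: "hd l \<in> bdry ?S" and lb: "last l \<in> bdry ?S"
    using assms by (auto simp: C_def)
  have bt: "broken_trace l" using tr by (simp add: trace_in_def)
  define m where "m = length l - 1"
  have l2: "length l \<ge> 2" using bt unfolding broken_trace_def by blast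
  have len: "length l = Suc m" "1 \<le> m" using l2 unfolding m_def by auto
  have ne: "l \<noteq> []" using len by auto
  define p0 where "p0 = snd (l!0)"
  define p1 where "p1 = p0 + int m"
  have tof: "t_of l (p0 + int i) = fst (l!i)" if "i \<le> m" for i
  proof -
    have "i < length l" using that len by simp
    then show ?thesis using bt_tof[OF bt] unfolding p0_def by blast
  qed
  have snd_i: "snd (l!i) = p0 + int i" if "i \<le> m" for i
  proof -
    have "i < length l" using that len by simp
    then show ?thesis using bt_snd[OF bt] unfolding p0_def by blast
  qed
  have pt: "l!i = (t_of l (p0 + int i), p0 + int i)" if "i \<le> m" for i
    using tof[OF that] snd_i[OF that] by (simp add: prod_eq_iff)
  have setl: "set l = (\<lambda>x. (t_of l x, x)) ` {p0..p1}"
  proof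
    show "set l \<subseteq> (\<lambda>x. (t_of l x, x)) ` {p0..p1}"
    proof
      fix p assume "p \<in> set l"
      then obtain i where i: "i < length l" "p = l!i" by (metis in_set_conv_nth)
      then have "i \<le> m" using len by simp
      then show "p \<in> (\<lambda>x. (t_of l x, x)) ` {p0..p1}" using pt i unfolding p1_def by force
    qed
  next
    show "(\<lambda>x. (t_of l x, x)) ` {p0..p1} \<subseteq> set l"
    proof
      fix p assume "p \<in> (\<lambda>x. (t_of l x, x)) ` {p0..p1}"
      then obtain x where x: "p0 \<le> x" "x \<le> p1" "p = (t_of l x, x)" by auto
      define i where "i = nat (x - p0)"
      have i: "i \<le> m" "x = p0 + int i" using x unfolding i_def p1_def by auto
      have "l!i \<in> set l" using i len by simp
      then show "p \<in> set l" using pt[OF i(1)] i x by simp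
    qed
  qed
  have Dl: "D l = {p0..p1}" unfolding D_def setl by (auto simp: image_image)
  have lip: "\<forall>x y. p0 \<le> x \<longrightarrow> x \<le> y \<longrightarrow> y \<le> p1 \<longrightarrow> t_of l y - t_of l x \<le> y - x \<and> t_of l x - t_of l y \<le> y - x"
  proof (intro allI impI)
    fix x y assume xy: "p0 \<le> x" "x \<le> y" "y \<le> p1"
    define i where "i = nat (x - p0)"
    define j where "j = nat (y - p0)"
    have ij: "i \<le> j" "j \<le> m" "x = p0 + int i" "y = p0 + int j" using xy unfolding i_def j_def p1_def by auto
    have "fst (l!j) - fst (l!i) \<le> int (j - i) \<and> fst (l!i) - fst (l!j) \<le> int (j - i)"
      using bt_lip[OF bt, of j i] ij len by simp
    then show "t_of l y - t_of l x \<le> y - x \<and> t_of l x - t_of l y \<le> y - x"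
      using tof ij by (simp add: of_nat_diff)
  qed
  have ev: "\<forall>x\<in>{p0..p1}. even (t_of l x + x)"
  proof
    fix x assume "x \<in> {p0..p1}"
    then have "(t_of l x, x) \<in> set l" using setl by auto
    then show "even (t_of l x + x)" using bt by (auto simp: broken_trace_def lattice_def)
  qed
  have inS: "\<And>t x. (t, x) \<in> ?S \<longleftrightarrow> even (t + x) \<and> inR a b c d t x"
    by (auto simp: rect_dom_def lattice_def inR_def)
  have edge: "\<And>i. Suc i < length l \<Longrightarrow> l!i \<in> ?S \<or> l!Suc i \<in> ?S"
  proof -
    fix i assume "Suc i < length l"
    then have "{l!i, l!Suc i} \<in> edges_cl ?S" using tr by (simp add: trace_in_def)
    then obtain p q where "{l!i, l!Suc i} = {p, q}" "p \<in> ?S \<or> q \<in> ?S" by (auto simp: edges_cl_def)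
    then show "l!i \<in> ?S \<or> l!Suc i \<in> ?S" by (metis doubleton_eq_iff)
  qed
  have h0: "l!0 \<notin> ?S" using hb ne by (simp add: bdry_def hd_conv_nth)
  have hm: "l!m \<notin> ?S" using lb ne len by (simp add: bdry_def last_conv_nth)
  have s1: "l!1 \<in> ?S" using edge[of 0] h0 len by simp
  have sm: "l!(m-1) \<in> ?S" using edge[of "m-1"] hm len by simp
  have e1: "inR a b c d (t_of l (p0+1)) (p0+1)" using s1 pt[of 1] len inS by auto
  have em: "inR a b c d (t_of l (p1-1)) (p1-1)"
  proof -
    have "l!(m-1) = (t_of l (p1-1), p1-1)" using pt[of "m-1"] len unfolding p1_def by (simp add: of_nat_diff algebra_simps)
    then show ?thesis using sm inS by auto
  qed
  have n0: "\<not> inR a b c d (t_of l p0) p0"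
    using h0 pt[of 0] inS ev unfolding p1_def by auto
  have nm: "\<not> inR a b c d (t_of l p1) p1"
    using hm pt[of m] inS ev len unfolding p1_def by auto
  have "p0 < p1" using len unfolding p1_def by simp
  then show ?thesis using setl Dl lip ev e1 em n0 nm by blast
qed


lemma derived:
  fixes F :: "int \<Rightarrow> int"
  assumes ev4: "even a" "even b" "even c" "even d"
    and p: "p0 < p1"
    and lip: "\<forall>x y. p0 \<le> x \<longrightarrow> x \<le> y \<longrightarrow> y \<le> p1 \<longrightarrow> F y - F x \<le> y - x \<and> F x - F y \<le> y - x"
    and ev: "\<forall>x\<in>{p0..p1}. even (F x + x)"
    and s1: "inR a b c d (F (p0+1)) (p0+1)" and s2: "inR a b c d (F (p1-1)) (p1-1)"
    and n1: "\<not> inR a b c d (F p0) p0" and n2: "\<not> inR a b c d (F p1) p1"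
  shows "F p0 + p0 \<le> a - 2 \<or> F p0 - p0 \<ge> d + 2"
    and "F p1 + p1 \<ge> b + 2 \<or> F p1 - p1 \<le> c - 2"
    and "\<And>x. p0 \<le> x \<Longrightarrow> x \<le> p1 \<Longrightarrow> a - 2 \<le> F x + x \<and> F x + x \<le> b + 2 \<and> c - 2 \<le> F x - x \<and> F x - x \<le> d + 2"
    and "\<And>x. p0 < x \<Longrightarrow> x \<le> p1 \<Longrightarrow> a \<le> F x + x \<and> F x - x \<le> d"
    and "\<And>x. p0 \<le> x \<Longrightarrow> x < p1 \<Longrightarrow> F x + x \<le> b \<and> c \<le> F x - x"
proof -
  have L: "F y - F x \<le> y - x \<and> F x - F y \<le> y - x" if "p0 \<le> x" "x \<le> y" "y \<le> p1" for x y
    using lip that by blast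
  have A1: "a \<le> F (p0+1) + (p0+1)" "F (p0+1) + (p0+1) \<le> b" "c \<le> F (p0+1) - (p0+1)" "F (p0+1) - (p0+1) \<le> d"
    using s1 by (auto simp: inR_def)
  have A2: "a \<le> F (p1-1) + (p1-1)" "F (p1-1) + (p1-1) \<le> b" "c \<le> F (p1-1) - (p1-1)" "F (p1-1) - (p1-1) \<le> d"
    using s2 by (auto simp: inR_def)
  show G4: "a \<le> F x + x \<and> F x - x \<le> d" if "p0 < x" "x \<le> p1" for x
    using L[of "p0+1" x] A1 that by auto
  show G5: "F x + x \<le> b \<and> c \<le> F x - x" if "p0 \<le> x" "x < p1" for x
    using L[of x "p1-1"] A2 that by auto
  show G3: "a - 2 \<le> F x + x \<and> F x + x \<le> b + 2 \<and> c - 2 \<le> F x - x \<and> F x - x \<le> d + 2" if "p0 \<le> x" "x \<le> p1" for x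
  proof -
    have "a - 2 \<le> F x + x \<and> F x - x \<le> d + 2"
    proof (cases "x = p0")
      case True then show ?thesis using L[of p0 "p0+1"] A1 p by auto
    next
      case False then show ?thesis using G4[of x] that by auto
    qed
    moreover have "F x + x \<le> b + 2 \<and> c - 2 \<le> F x - x"
    proof (cases "x = p1")
      case True then show ?thesis using L[of "p1-1" p1] A2 p by auto
    next
      case False then show ?thesis using G5[of x] that by auto
    qed
    ultimately show ?thesis by blast
  qed
  have e0: "even (F p0 + p0)" "even (F p1 + p1)" using ev p by auto
  have "F p0 + p0 \<le> b" "c \<le> F p0 - p0" using G5[of p0] p by auto
  then have "F p0 + p0 < a \<or> F p0 - p0 > d" using n1 by (auto simp: inR_def)
  then show "F p0 + p0 \<le> a - 2 \<or> F p0 - p0 \<ge> d + 2" using e0 ev4 by presburger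
  have "a \<le> F p1 + p1" "F p1 - p1 \<le> d" using G4[of p1] p by auto
  then have "F p1 + p1 > b \<or> F p1 - p1 < c" using n2 by (auto simp: inR_def)
  then show "F p1 + p1 \<ge> b + 2 \<or> F p1 - p1 \<le> c - 2" using e0 ev4 by presburger
qed


lemma core:
  fixes F G :: "int \<Rightarrow> int"
  assumes p: "p0 < p1" and q: "q0 < q1"
    and LF: "\<And>x y. p0 \<le> x \<Longrightarrow> x \<le> y \<Longrightarrow> y \<le> p1 \<Longrightarrow> F y - F x \<le> y - x \<and> F x - F y \<le> y - x"
    and LG: "\<And>x y. q0 \<le> x \<Longrightarrow> x \<le> y \<Longrightarrow> y \<le> q1 \<Longrightarrow> G y - G x \<le> y - x \<and> G x - G y \<le> y - x"
    and Fs: "F p0 + p0 \<le> a - 2 \<or> F p0 - p0 \<ge> d + 2"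
    and Fe: "F p1 + p1 \<ge> b + 2 \<or> F p1 - p1 \<le> c - 2"
    and F3: "\<And>x. p0 \<le> x \<Longrightarrow> x \<le> p1 \<Longrightarrow> a - 2 \<le> F x + x \<and> F x + x \<le> b + 2 \<and> c - 2 \<le> F x - x \<and> F x - x \<le> d + 2"
    and F4: "\<And>x. p0 < x \<Longrightarrow> x \<le> p1 \<Longrightarrow> a \<le> F x + x \<and> F x - x \<le> d"
    and F5: "\<And>x. p0 \<le> x \<Longrightarrow> x < p1 \<Longrightarrow> F x + x \<le> b \<and> c \<le> F x - x"
    and Gs: "G q0 + q0 \<le> a - 2 \<or> G q0 - q0 \<ge> d + 2"
    and Ge: "G q1 + q1 \<ge> b + 2 \<or> G q1 - q1 \<le> c - 2"
    and G3: "\<And>x. q0 \<le> x \<Longrightarrow> x \<le> q1 \<Longrightarrow> a - 2 \<le> G x + x \<and> G x + x \<le> b + 2 \<and> c - 2 \<le> G x - x \<and> G x - x \<le> d + 2"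
    and G4: "\<And>x. q0 < x \<Longrightarrow> x \<le> q1 \<Longrightarrow> a \<le> G x + x \<and> G x - x \<le> d"
    and G5: "\<And>x. q0 \<le> x \<Longrightarrow> x < q1 \<Longrightarrow> G x + x \<le> b \<and> c \<le> G x - x"
  shows "((\<forall>x. p0 \<le> x \<and> x \<le> p1 \<and> q0 \<le> x \<and> x \<le> q1 \<longrightarrow> F x \<le> G x) \<and>
          (\<exists>x'\<in>{q0..q1}. \<exists>x\<in>{p0..p1}. F x \<le> G x'))
     \<longleftrightarrow> (\<forall>x'\<in>{q0..q1}. \<exists>x\<in>{p0..p1}. F x + \<bar>x' - x\<bar> \<le> G x')"
proof
  assume H: "\<forall>x'\<in>{q0..q1}. \<exists>x\<in>{p0..p1}. F x + \<bar>x' - x\<bar> \<le> G x'"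
  have c1: "F x \<le> G x" if "p0 \<le> x" "x \<le> p1" "q0 \<le> x" "x \<le> q1" for x
  proof -
    have "x \<in> {q0..q1}" using that by auto
    then obtain y where y: "y \<in> {p0..p1}" "F y + \<bar>x - y\<bar> \<le> G x" using H by blast
    show ?thesis
    proof (cases "y \<le> x")
      case True then show ?thesis using LF[of y x] y that by auto
    next
      case False then show ?thesis using LF[of x y] y that by auto
    qed
  qed
  moreover have "\<exists>x'\<in>{q0..q1}. \<exists>x\<in>{p0..p1}. F x \<le> G x'"
  proof -
    have "q0 \<in> {q0..q1}" using q by auto
    then obtain y where y: "y \<in> {p0..p1}" "F y + \<bar>q0 - y\<bar> \<le> G q0" using H by blast
    then show ?thesis using q by force
  qed
  ultimately show "(\<forall>x. p0 \<le> x \<and> x \<le> p1 \<and> q0 \<le> x \<and> x \<le> q1 \<longrightarrow> F x \<le> G x) \<and>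
          (\<exists>x'\<in>{q0..q1}. \<exists>x\<in>{p0..p1}. F x \<le> G x')" by blast
next
  assume H: "(\<forall>x. p0 \<le> x \<and> x \<le> p1 \<and> q0 \<le> x \<and> x \<le> q1 \<longrightarrow> F x \<le> G x) \<and>
          (\<exists>x'\<in>{q0..q1}. \<exists>x\<in>{p0..p1}. F x \<le> G x')"
  then have C1: "\<And>x. p0 \<le> x \<Longrightarrow> x \<le> p1 \<Longrightarrow> q0 \<le> x \<Longrightarrow> x \<le> q1 \<Longrightarrow> F x \<le> G x" by blast
  from H obtain z' z where z: "q0 \<le> z'" "z' \<le> q1" "p0 \<le> z" "z \<le> p1" "F z \<le> G z'" by auto
  show "\<forall>x'\<in>{q0..q1}. \<exists>x\<in>{p0..p1}. F x + \<bar>x' - x\<bar> \<le> G x'"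
  proof
    fix x' assume x': "x' \<in> {q0..q1}"
    then have x1: "q0 \<le> x'" "x' \<le> q1" by auto
    consider "p0 \<le> x' \<and> x' \<le> p1" | "x' > p1" | "x' < p0" by linarith
    then show "\<exists>x\<in>{p0..p1}. F x + \<bar>x' - x\<bar> \<le> G x'"
    proof cases
      case 1
      then have "F x' + \<bar>x' - x'\<bar> \<le> G x'" using C1[of x'] x1 by auto
      then show ?thesis using 1 by (intro bexI[of _ x']) auto
    next
      case 2
      show ?thesis
      proof (cases "F p1 - p1 \<le> c - 2")
        case True
        then have "F p1 + \<bar>x' - p1\<bar> \<le> G x'" using G3[of x'] x1 2 by auto
        then show ?thesis using p by (intro bexI[of _ p1]) auto
      next
        case False
        then have u: "F p1 + p1 \<ge> b + 2" using Fe by auto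
        show ?thesis
        proof (cases "q0 \<le> p1")
          case True
          have "F p1 \<le> G p1" using C1[of p1] True p x1 2 by auto
          moreover have "G p1 + p1 \<le> b" using G5[of p1] True x1 2 by auto
          ultimately show ?thesis using u by auto
        next
          case False
          have vF: "F p1 - p1 \<le> d" using F4[of p1] p by auto
          have Gq: "G q0 + q0 \<le> b" using G5[of q0] q by auto
          show ?thesis
          proof (cases "G q0 - q0 \<ge> d + 2")
            case True then show ?thesis using False u vF Gq by linarith
          next
            case nv: False
            then have ua: "G q0 + q0 \<le> a - 2" using Gs by auto
            have g1: "G z' + z' \<le> b + 2" using G3[of z'] z by auto
            have g2: "G z' - z' \<le> G q0 - q0" using LG[of q0 z'] z by auto
            have f1: "F z + z \<ge> a - 2" using F3[of z] z by auto
            have f2: "F z - z \<ge> F p1 - p1" using LF[of z p1] z by auto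
            show ?thesis using g1 g2 f1 f2 z(5) ua False u by linarith
          qed
        qed
      qed
    next
      case 3
      show ?thesis
      proof (cases "F p0 + p0 \<le> a - 2")
        case True
        then have "F p0 + \<bar>x' - p0\<bar> \<le> G x'" using G3[of x'] x1 3 by auto
        then show ?thesis using p by (intro bexI[of _ p0]) auto
      next
        case False
        then have v: "F p0 - p0 \<ge> d + 2" using Fs by auto
        show ?thesis
        proof (cases "q1 \<ge> p0")
          case True
          have "F p0 \<le> G p0" using C1[of p0] True p x1 3 by auto
          moreover have "G p0 - p0 \<le> d" using G4[of p0] True x1 3 by auto
          ultimately show ?thesis using v by auto
        next
          case False
          have uF: "F p0 + p0 \<le> b" using F5[of p0] p by auto
          have Gq: "G q1 - q1 \<le> d" using G4[of q1] q by auto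
          show ?thesis
          proof (cases "G q1 + q1 \<ge> b + 2")
            case True then show ?thesis using False v uF Gq by linarith
          next
            case nu: False
            then have vc: "G q1 - q1 \<le> c - 2" using Ge by auto
            have g1: "G z' - z' \<le> d + 2" using G3[of z'] z by auto
            have g2: "G z' + z' \<le> G q1 + q1" using LG[of z' q1] z by auto
            have f1: "F z - z \<ge> c - 2" using F3[of z] z by auto
            have f2: "F z + z \<ge> F p0 + p0" using LF[of p0 z] z by auto
            show ?thesis using g1 g2 f1 f2 z(5) vc False v by linarith
          qed
        qed
      qed
    qed
  qed
qed


theorem mainTheorem7:
  fixes a b c d :: int and l l' :: "pt list"
  assumes "even a" "even b" "even c" "even d" "a \<le> b" "c \<le> d"
    and "rect_dom a b c d \<noteq> {}"
    and "l \<in> C (rect_dom a b c d)" "l' \<in> C (rect_dom a b c d)"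
  shows "succeq l' l \<longleftrightarrow> set l' \<subseteq> A l"
proof -
  obtain p0 p1 where P: "p0 < p1" "set l = (\<lambda>x. (t_of l x, x)) ` {p0..p1}" "D l = {p0..p1}"
    "\<forall>x y. p0 \<le> x \<longrightarrow> x \<le> y \<longrightarrow> y \<le> p1 \<longrightarrow> t_of l y - t_of l x \<le> y - x \<and> t_of l x - t_of l y \<le> y - x"
    "\<forall>x\<in>{p0..p1}. even (t_of l x + x)"
    "inR a b c d (t_of l (p0+1)) (p0+1)" "inR a b c d (t_of l (p1-1)) (p1-1)"
    "\<not> inR a b c d (t_of l p0) p0" "\<not> inR a b c d (t_of l p1) p1"
    using trace_facts[OF assms(8)] by blast
  obtain q0 q1 where Q: "q0 < q1" "set l' = (\<lambda>x. (t_of l' x, x)) ` {q0..q1}" "D l' = {q0..q1}"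
    "\<forall>x y. q0 \<le> x \<longrightarrow> x \<le> y \<longrightarrow> y \<le> q1 \<longrightarrow> t_of l' y - t_of l' x \<le> y - x \<and> t_of l' x - t_of l' y \<le> y - x"
    "\<forall>x\<in>{q0..q1}. even (t_of l' x + x)"
    "inR a b c d (t_of l' (q0+1)) (q0+1)" "inR a b c d (t_of l' (q1-1)) (q1-1)"
    "\<not> inR a b c d (t_of l' q0) q0" "\<not> inR a b c d (t_of l' q1) q1"
    using trace_facts[OF assms(9)] by blast
  note DF = derived[OF assms(1-4) P(1) P(4) P(5) P(6) P(7) P(8) P(9)]
  note DG = derived[OF assms(1-4) Q(1) Q(4) Q(5) Q(6) Q(7) Q(8) Q(9)]
  have LF: "\<And>x y. p0 \<le> x \<Longrightarrow> x \<le> y \<Longrightarrow> y \<le> p1 \<Longrightarrow> t_of l y - t_of l x \<le> y - x \<and> t_of l x - t_of l y \<le> y - x"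
    using P(4) by blast
  have LG: "\<And>x y. q0 \<le> x \<Longrightarrow> x \<le> y \<Longrightarrow> y \<le> q1 \<Longrightarrow> t_of l' y - t_of l' x \<le> y - x \<and> t_of l' x - t_of l' y \<le> y - x"
    using Q(4) by blast
  note K = core[OF P(1) Q(1) LF LG DF(1) DF(2) DF(3) DF(4) DF(5) DG(1) DG(2) DG(3) DG(4) DG(5)]
  have E1: "succeq l' l \<longleftrightarrow> ((\<forall>x. p0 \<le> x \<and> x \<le> p1 \<and> q0 \<le> x \<and> x \<le> q1 \<longrightarrow> t_of l x \<le> t_of l' x) \<and>
          (\<exists>x'\<in>{q0..q1}. \<exists>x\<in>{p0..p1}. t_of l x \<le> t_of l' x'))"
    unfolding succeq_def P(3) Q(3) by auto
  have E2: "set l' \<subseteq> A l \<longleftrightarrow> (\<forall>x'\<in>{q0..q1}. \<exists>x\<in>{p0..p1}. t_of l x + \<bar>x' - x\<bar> \<le> t_of l' x')"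
  proof
    assume H: "set l' \<subseteq> A l"
    show "\<forall>x'\<in>{q0..q1}. \<exists>x\<in>{p0..p1}. t_of l x + \<bar>x' - x\<bar> \<le> t_of l' x'"
    proof
      fix x' assume x': "x' \<in> {q0..q1}"
      then have "(t_of l' x', x') \<in> A l" using H Q(2) by auto
      then show "\<exists>x\<in>{p0..p1}. t_of l x + \<bar>x' - x\<bar> \<le> t_of l' x'"
        unfolding A_def P(2) by auto
    qed
  next
    assume H: "\<forall>x'\<in>{q0..q1}. \<exists>x\<in>{p0..p1}. t_of l x + \<bar>x' - x\<bar> \<le> t_of l' x'"
    show "set l' \<subseteq> A l"
    proof
      fix p assume "p \<in> set l'"
      then obtain x' where x': "x' \<in> {q0..q1}" "p = (t_of l' x', x')" using Q(2) by auto
      then obtain x where x: "x \<in> {p0..p1}" "t_of l x + \<bar>x' - x\<bar> \<le> t_of l' x'" using H by blast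
      have lat: "(t_of l' x', x') \<in> lattice" using Q(5) x' by (auto simp: lattice_def)
      have "(t_of l x, x) \<in> set l" using P(2) x by auto
      then show "p \<in> A l" unfolding A_def using lat x x' by auto
    qed
  qed
  show ?thesis using E1 E2 K by blast
qed

end
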